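(* For all integers $m\ge n\ge 2$, $$\gamma^{SLD}(K_n\times K_m)=\begin{cases} m+n-1, & n>2,\\ m, & n=2,\ m>2,\\ 4, & n=m=2.\end{cases}$$
   Context: $K_q$ is the complete graph on vertex set $\{1,\dots,q\}$. The direct product $G_1\times G_2$ has vertex set $V_1\times V_2$, with $(u_1,u_2)$ adjacent to $(v_1,v_2)$ iff $u_1v_1\in E_1$ and $u_2v_2\in E_2$. For a code (nonempty vertex subset) $C$ and vertex $v$, $I(C;v)=N[v]\cap C$, where $N[v]$ is the closed neighbourhood. A code $C$ in a graph $G$ is self-locating-dominating if for every non-codeword $u$, $I(C;u)\ne\emptyset$ and $\bigcap_{c\in I(C;u)}N[c]=\{u\}$. $\gamma^{SLD}(G)$ is the minimum size of a self-locating-dominating code in the finite graph $G$. *)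

theory Defs
  imports Main
begin

text \<open>A finite graph is given by a vertex set V and an adjacency relation E
  (assumed symmetric and irreflexive for the graphs considered).\<close>

definition complete_verts :: "nat \<Rightarrow> nat set" where
  "complete_verts q = {1..q}"

definition complete_adj :: "nat \<Rightarrow> nat \<Rightarrow> bool" where
  "complete_adj u v \<longleftrightarrow> u \<noteq> v"

definition dprod_adj :: "('a \<Rightarrow> 'a \<Rightarrow> bool) \<Rightarrow> ('b \<Rightarrow> 'b \<Rightarrow> bool)
    \<Rightarrow> 'a \<times> 'b \<Rightarrow> 'a \<times> 'b \<Rightarrow> bool" where
  "dprod_adj E1 E2 x y \<longleftrightarrow> E1 (fst x) (fst y) \<and> E2 (snd x) (snd y)"

definition cnbhd :: "'a set \<Rightarrow> ('a \<Rightarrow> 'a \<Rightarrow> bool) \<Rightarrow> 'a \<Rightarrow> 'a set" where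
  "cnbhd V E v = {u \<in> V. u = v \<or> E v u}"

definition Iset :: "'a set \<Rightarrow> ('a \<Rightarrow> 'a \<Rightarrow> bool) \<Rightarrow> 'a set \<Rightarrow> 'a \<Rightarrow> 'a set" where
  "Iset V E C v = cnbhd V E v \<inter> C"

definition is_SLD :: "'a set \<Rightarrow> ('a \<Rightarrow> 'a \<Rightarrow> bool) \<Rightarrow> 'a set \<Rightarrow> bool" where
  "is_SLD V E C \<longleftrightarrow> C \<subseteq> V \<and> C \<noteq> {} \<and>
     (\<forall>u \<in> V - C. Iset V E C u \<noteq> {} \<and>
        (\<Inter>c \<in> Iset V E C u. cnbhd V E c) = {u})"

definition gamma_SLD :: "'a set \<Rightarrow> ('a \<Rightarrow> 'a \<Rightarrow> bool) \<Rightarrow> nat" where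
  "gamma_SLD V E = Min (card ` {C. is_SLD V E C})"

end

theory Submission imports Defs begin

abbreviation "VV n m \<equiv> complete_verts n \<times> complete_verts m"
abbreviation "EE \<equiv> dprod_adj complete_adj complete_adj"

lemma cnb: "x \<in> cnbhd V EE c \<longleftrightarrow> x \<in> V \<and> (x = c \<or> (fst c \<noteq> fst x \<and> snd c \<noteq> snd x))"
  by (auto simp: cnbhd_def dprod_adj_def complete_adj_def)

lemma nec:
  assumes "is_SLD (VV n m) EE C" "(a,b) \<in> VV n m" "(a,b) \<notin> C" "(x,y) \<in> VV n m" "(x,y) \<noteq> (a,b)"
  shows "\<exists>k l. (k,l)\<in>C \<and> k\<noteq>a \<and> l\<noteq>b \<and> (x,y)\<noteq>(k,l) \<and> (x=k \<or> y=l)"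
proof -
  let ?I = "Iset (VV n m) EE C (a,b)"
  have eq: "(\<Inter>c\<in>?I. cnbhd (VV n m) EE c) = {(a,b)}" using assms(1-3) unfolding is_SLD_def by blast
  have "(x,y) \<notin> (\<Inter>c\<in>?I. cnbhd (VV n m) EE c)" using eq assms(5) by blast
  then obtain c where c: "c \<in> ?I" "(x,y) \<notin> cnbhd (VV n m) EE c" by blast
  obtain k l where kl: "c = (k,l)" by (cases c)
  have "(k,l) \<in> C" "(k,l) \<in> cnbhd (VV n m) EE (a,b)" using c unfolding kl Iset_def by auto
  moreover have "(x,y) \<notin> cnbhd (VV n m) EE (k,l)" using c kl by simp
  ultimately show ?thesis using assms(3,4) unfolding cnb by auto
qed

lemma rowl:
  assumes "is_SLD (VV n m) EE C" "(a,b) \<in> VV n m" "(a,b) \<notin> C" "k \<in> {1..n}" "k \<noteq> a"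
  shows "\<exists>l. (k,l)\<in>C \<and> l \<noteq> b"
  using nec[OF assms(1-3), of k b] assms by (auto simp: complete_verts_def)

lemma coll:
  assumes "is_SLD (VV n m) EE C" "(a,b) \<in> VV n m" "(a,b) \<notin> C" "l \<in> {1..m}" "l \<noteq> b"
  shows "\<exists>k. (k,l)\<in>C \<and> k \<noteq> a"
  using nec[OF assms(1-3), of a l] assms by (auto simp: complete_verts_def)

lemma empty_row:
  assumes "is_SLD (VV n m) EE C" "k \<in> {1..n}" "\<forall>l. (k,l) \<notin> C"
  shows "({1..n}-{k}) \<times> {1..m} \<subseteq> C"
proof
  fix p assume p: "p \<in> ({1..n}-{k}) \<times> {1..m}"
  obtain a b where ab: "p = (a,b)" by (cases p)
  show "p \<in> C"
  proof (rule ccontr)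
    assume "p \<notin> C"
    then have "(a,b) \<notin> C" "(a,b) \<in> VV n m" "k \<noteq> a" using p ab by (auto simp: complete_verts_def)
    from rowl[OF assms(1) this(2,1) assms(2) this(3)] assms(3) show False by auto
  qed
qed

lemma empty_col:
  assumes "is_SLD (VV n m) EE C" "l \<in> {1..m}" "\<forall>k. (k,l) \<notin> C"
  shows "{1..n} \<times> ({1..m}-{l}) \<subseteq> C"
proof
  fix p assume p: "p \<in> {1..n} \<times> ({1..m}-{l})"
  obtain a b where ab: "p = (a,b)" by (cases p)
  show "p \<in> C"
  proof (rule ccontr)
    assume "p \<notin> C"
    then have "(a,b) \<notin> C" "(a,b) \<in> VV n m" "l \<noteq> b" using p ab by (auto simp: complete_verts_def)
    from coll[OF assms(1) this(2,1) assms(2) this(3)] assms(3) show False by auto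
  qed
qed

lemma leaf:
  assumes "is_SLD (VV n m) EE C" "(k,l) \<in> C" "\<forall>k'. (k',l) \<in> C \<longrightarrow> k' = k"
  shows "{k} \<times> {1..m} \<subseteq> C"
proof
  fix p assume p: "p \<in> {k} \<times> {1..m}"
  obtain a l' where ab: "p = (a,l')" by (cases p)
  have sub: "C \<subseteq> VV n m" using assms(1) by (simp add: is_SLD_def)
  show "p \<in> C"
  proof (rule ccontr)
    assume "p \<notin> C"
    then have l': "(k,l') \<notin> C" "l' \<in> {1..m}" using p ab by auto
    have "l' \<noteq> l" using l' assms(2) by auto
    have "k \<in> {1..n}" "l \<in> {1..m}" using sub assms(2) by (auto simp: complete_verts_def)
    then have "(k,l') \<in> VV n m" using l' by (simp add: complete_verts_def)
    from coll[OF assms(1) this l'(1) \<open>l \<in> {1..m}\<close>] \<open>l' \<noteq> l\<close> assms(3) show False by auto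
  qed
qed

lemma lower:
  assumes S: "is_SLD (VV n m) EE C"
  shows "(n-1)*m \<le> card C \<or> n*(m-1) \<le> card C \<or> m+n-1 \<le> card C \<or> 2*m \<le> card C"
proof -
  have sub: "C \<subseteq> {1..n} \<times> {1..m}" using S by (simp add: is_SLD_def complete_verts_def)
  have fin: "finite C" using sub finite_subset by blast
  show ?thesis
  proof (cases "\<exists>k\<in>{1..n}. \<forall>l. (k,l) \<notin> C")
    case True
    then obtain k where k: "k\<in>{1..n}" "\<forall>l. (k,l) \<notin> C" by blast
    have "card (({1..n}-{k}) \<times> {1..m}) \<le> card C" using empty_row[OF S k] fin card_mono by blast
    moreover have c: "card ({1..n}-{k}) = n-1" using k(1) by simp
    have "card (({1..n}-{k}) \<times> {1..m}) = (n-1)*m" by (simp only: card_cartesian_product c) simp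
    ultimately show ?thesis by linarith
  next
    case nr: False
    show ?thesis
    proof (cases "\<exists>l\<in>{1..m}. \<forall>k. (k,l) \<notin> C")
      case True
      then obtain l where l: "l\<in>{1..m}" "\<forall>k. (k,l) \<notin> C" by blast
      have "card ({1..n} \<times> ({1..m}-{l})) \<le> card C" using empty_col[OF S l] fin card_mono by blast
      moreover have "card ({1..n} \<times> ({1..m}-{l})) = n*(m-1)" using l(1) by (simp add: card_cartesian_product)
      ultimately show ?thesis by linarith
    next
      case nc: False
      show ?thesis
      proof (cases "\<exists>k0\<in>{1..n}. {k0} \<times> {1..m} \<subseteq> C")
        case True
        then obtain k0 where k0: "k0\<in>{1..n}" "{k0} \<times> {1..m} \<subseteq> C" by blast
        have "\<forall>k\<in>{1..n}. \<exists>l. (k,l) \<in> C" using nr by blast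
        then obtain h where h: "\<forall>k\<in>{1..n}. (k, h k) \<in> C" by metis
        let ?S = "{k0} \<times> {1..m} \<union> (\<lambda>k. (k, h k)) ` ({1..n}-{k0})"
        have "?S \<subseteq> C" using k0 h by auto
        then have "card ?S \<le> card C" using fin card_mono by blast
        moreover have "card ?S = m + (n-1)"
        proof -
          have c: "card ({1..n}-{k0}) = n-1" using k0(1) by simp
          have "card ((\<lambda>k. (k, h k)) ` ({1..n}-{k0})) = n - 1"
            by (subst card_image, simp add: inj_on_def, rule c)
          moreover have "{k0} \<times> {1..m} \<inter> (\<lambda>k. (k, h k)) ` ({1..n}-{k0}) = {}" by auto
          ultimately show ?thesis by (simp add: card_Un_disjoint card_cartesian_product)
        qed
        ultimately show ?thesis by linarith
      next
        case nf: False
        have "\<forall>l\<in>{1..m}. \<exists>k1 k2. k1 \<noteq> k2 \<and> (k1,l) \<in> C \<and> (k2,l) \<in> C"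
        proof
          fix l assume l: "l \<in> {1..m}"
          then obtain k where k: "(k,l) \<in> C" using nc by blast
          have kn: "k \<in> {1..n}" using k sub by auto
          show "\<exists>k1 k2. k1 \<noteq> k2 \<and> (k1,l) \<in> C \<and> (k2,l) \<in> C"
          proof (rule ccontr)
            assume "\<not> ?thesis"
            then have "\<forall>k'. (k',l) \<in> C \<longrightarrow> k' = k" using k by blast
            from leaf[OF S k this] nf kn show False by blast
          qed
        qed
        then obtain f g where fg: "\<forall>l\<in>{1..m}. f l \<noteq> g l \<and> (f l,l) \<in> C \<and> (g l,l) \<in> C" by metis
        let ?S = "(\<lambda>l. (f l, l)) ` {1..m} \<union> (\<lambda>l. (g l, l)) ` {1..m}"
        have "?S \<subseteq> C" using fg by auto
        then have "card ?S \<le> card C" using fin card_mono by blast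
        moreover have "card ?S = 2*m"
        proof -
          have "card ((\<lambda>l. (f l, l)) ` {1..m}) = m" by (subst card_image) (auto simp: inj_on_def)
          moreover have "card ((\<lambda>l. (g l, l)) ` {1..m}) = m" by (subst card_image) (auto simp: inj_on_def)
          moreover have "(\<lambda>l. (f l, l)) ` {1..m} \<inter> (\<lambda>l. (g l, l)) ` {1..m} = {}" using fg by auto
          ultimately show ?thesis by (simp add: card_Un_disjoint)
        qed
        ultimately show ?thesis by linarith
      qed
    qed
  qed
qed

lemma two22:
  assumes S: "is_SLD (VV 2 2) EE C"
  shows "C = VV 2 2"
proof -
  have sub: "C \<subseteq> VV 2 2" using S by (simp add: is_SLD_def)
  have "VV 2 2 \<subseteq> C"
  proof
    fix p assume p: "p \<in> VV 2 2"
    obtain a b where ab: "p = (a,b)" by (cases p)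
    show "p \<in> C"
    proof (rule ccontr)
      assume "p \<notin> C"
      have r: "1 \<le> a" "a \<le> 2" "1 \<le> b" "b \<le> 2" using p ab by (auto simp: complete_verts_def)
      then have "3 - a \<noteq> a" by arith
      have v: "(3-a,3-b) \<in> VV 2 2" "(3-a,3-b) \<noteq> (a,b)" using r \<open>3 - a \<noteq> a\<close> by (auto simp: complete_verts_def)
      from nec[OF S p[unfolded ab] \<open>p \<notin> C\<close>[unfolded ab] v] obtain k l where
        kl: "(k,l)\<in>C" "k\<noteq>a" "l\<noteq>b" "(3-a,3-b)\<noteq>(k,l)" by blast
      have "k \<in> {1..2}" "l \<in> {1..2}" using kl(1) sub by (auto simp: complete_verts_def)
      then have "1 \<le> k" "k \<le> 2" "1 \<le> l" "l \<le> 2" by simp_all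
      then have "k = 3 - a" "l = 3 - b" using r kl(2,3) by linarith+
      then show False using kl(4) by simp
    qed
  qed
  then show ?thesis using sub by blast
qed

lemma suff:
  assumes "C \<subseteq> VV n m" "C \<noteq> {}"
    "\<And>a b. (a,b)\<in>VV n m \<Longrightarrow> (a,b) \<notin> C \<Longrightarrow> \<exists>k l. (k,l)\<in>C \<and> k\<noteq>a \<and> l\<noteq>b"
    "\<And>a b x y. (a,b)\<in>VV n m \<Longrightarrow> (a,b) \<notin> C \<Longrightarrow> (x,y)\<in>VV n m \<Longrightarrow> (x,y)\<noteq>(a,b) \<Longrightarrow>
        \<exists>k l. (k,l)\<in>C \<and> k\<noteq>a \<and> l\<noteq>b \<and> (x,y)\<noteq>(k,l) \<and> (x=k \<or> y=l)"
  shows "is_SLD (VV n m) EE C"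
  unfolding is_SLD_def
proof (intro conjI ballI)
  show "C \<subseteq> VV n m" "C \<noteq> {}" using assms(1,2) by auto
  fix u assume u: "u \<in> VV n m - C"
  obtain a b where ab: "u = (a,b)" by (cases u)
  obtain k l where kl: "(k,l)\<in>C" "k\<noteq>a" "l\<noteq>b" using assms(3)[of a b] u ab by auto
  have "(k,l) \<in> cnbhd (VV n m) EE (a,b)" using kl assms(1) by (auto simp: cnb)
  then have klI: "(k,l) \<in> Iset (VV n m) EE C u" using kl ab unfolding Iset_def by blast
  then show "Iset (VV n m) EE C u \<noteq> {}" by blast
  show "(\<Inter>c\<in>Iset (VV n m) EE C u. cnbhd (VV n m) EE c) = {u}"
  proof
    show "{u} \<subseteq> (\<Inter>c\<in>Iset (VV n m) EE C u. cnbhd (VV n m) EE c)"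
      using u unfolding Iset_def by (auto simp: cnb)
    show "(\<Inter>c\<in>Iset (VV n m) EE C u. cnbhd (VV n m) EE c) \<subseteq> {u}"
    proof
      fix v assume v: "v \<in> (\<Inter>c\<in>Iset (VV n m) EE C u. cnbhd (VV n m) EE c)"
      obtain x y where xy: "v = (x,y)" by (cases v)
      have "v \<in> cnbhd (VV n m) EE (k,l)" using v klI by blast
      then have vV: "v \<in> VV n m" by (simp add: cnb)
      show "v \<in> {u}"
      proof (rule ccontr)
        assume "v \<notin> {u}"
        then obtain k' l' where kl': "(k',l')\<in>C" "k'\<noteq>a" "l'\<noteq>b" "(x,y)\<noteq>(k',l')" "x=k' \<or> y=l'"
          using assms(4)[of a b x y] u ab xy vV by auto
        have "(k',l') \<in> Iset (VV n m) EE C u" using kl' assms(1) u ab unfolding Iset_def by (auto simp: cnb)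
        then have "v \<in> cnbhd (VV n m) EE (k',l')" using v by blast
        then show False using kl' xy by (auto simp: cnb)
      qed
    qed
  qed
qed

definition pick :: "nat \<Rightarrow> nat \<Rightarrow> nat" where
  "pick b y = (if b\<noteq>1 \<and> y\<noteq>1 then 1 else if b\<noteq>2 \<and> y\<noteq>2 then 2 else 3)"

lemma pick: "pick b y \<noteq> b \<and> pick b y \<noteq> y \<and> (3 \<le> m \<longrightarrow> pick b y \<in> {1..m})"
  by (auto simp: pick_def)

lemma constr2:
  assumes "3 \<le> m"
  shows "is_SLD (VV 2 m) EE ({1} \<times> {1..m})"
proof (rule suff)
  show "{1} \<times> {1..m} \<subseteq> VV 2 m" by (auto simp: complete_verts_def)
  show "{1} \<times> {1..m} \<noteq> {}" using assms by auto
next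
  fix a b assume ab: "(a,b) \<in> VV 2 m" "(a,b) \<notin> {1} \<times> {1..m}"
  then have a: "a = 2" "b \<in> {1..m}" by (auto simp: complete_verts_def)
  then have a1: "(1::nat) \<noteq> a" by simp
  have p: "pick b b \<in> {1..m}" "pick b b \<noteq> b" using pick[of b b m] assms(1) by auto
  have "(1, pick b b) \<in> {1::nat} \<times> {1..m}" using p(1) by blast
  then show "\<exists>k l. (k,l)\<in>{1} \<times> {1..m} \<and> k\<noteq>a \<and> l\<noteq>b" using p a1 by (intro exI[of _ 1] exI[of _ "pick b b"]) simp
next
  fix a b x y assume ab: "(a,b) \<in> VV 2 m" "(a,b) \<notin> {1} \<times> {1..m}"
    and xy: "(x,y)\<in>VV 2 m" "(x,y)\<noteq>(a,b)"
  then have a: "a = 2" "b \<in> {1..m}" by (auto simp: complete_verts_def)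
  then have a1: "(1::nat) \<noteq> a" by simp
  have xy': "x \<in> {1..2}" "y \<in> {1..m}" using xy(1) by (simp_all add: complete_verts_def)
  show "\<exists>k l. (k,l)\<in>{1} \<times> {1..m} \<and> k\<noteq>a \<and> l\<noteq>b \<and> (x,y)\<noteq>(k,l) \<and> (x=k \<or> y=l)"
  proof (cases "x = 1")
    case True
    have p: "pick b y \<in> {1..m}" "pick b y \<noteq> b" "pick b y \<noteq> y" using pick[of b y m] assms(1) by auto
    have "(1, pick b y) \<in> {1::nat} \<times> {1..m}" using p(1) by blast
    then show ?thesis using p a1 True by (intro exI[of _ 1] exI[of _ "pick b y"]) simp
  next
    case False
    then have "x = 2" using xy' by simp
    then have "y \<noteq> b" using xy a by simp
    have "(1, y) \<in> {1::nat} \<times> {1..m}" using xy' by blast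
    then show ?thesis using a1 \<open>y \<noteq> b\<close> \<open>x \<noteq> 1\<close> by (intro exI[of _ 1] exI[of _ y]) simp
  qed
qed

lemma constr1:
  assumes "3 \<le> m" "2 \<le> n"
  shows "is_SLD (VV n m) EE ({1} \<times> {1..m} \<union> {1..n} \<times> {1})"
proof (rule suff)
  show "{1} \<times> {1..m} \<union> {1..n} \<times> {1} \<subseteq> VV n m" using assms by (auto simp: complete_verts_def)
  show "{1} \<times> {1..m} \<union> {1..n} \<times> {1} \<noteq> {}" using assms by auto
next
  fix a b assume ab: "(a,b) \<in> VV n m" "(a,b) \<notin> {1} \<times> {1..m} \<union> {1..n} \<times> {1}"
  then have a: "a \<noteq> 1" "b \<noteq> 1" by (auto simp: complete_verts_def)
  have "(1,1) \<in> {1::nat} \<times> {1..m} \<union> {1..n} \<times> {1}" using assms by simp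
  then show "\<exists>k l. (k,l)\<in>{1} \<times> {1..m} \<union> {1..n} \<times> {1} \<and> k\<noteq>a \<and> l\<noteq>b"
    using a by (intro exI[of _ 1] exI[of _ 1]) simp
next
  fix a b x y assume ab: "(a,b) \<in> VV n m" "(a,b) \<notin> {1} \<times> {1..m} \<union> {1..n} \<times> {1}"
    and xy: "(x,y)\<in>VV n m" "(x,y)\<noteq>(a,b)"
  then have a: "a \<noteq> 1" "b \<noteq> 1" by (auto simp: complete_verts_def)
  have xy': "x \<in> {1..n}" "y \<in> {1..m}" using xy(1) by (simp_all add: complete_verts_def)
  let ?C = "{1::nat} \<times> {1..m} \<union> {1..n} \<times> {1::nat}"
  show "\<exists>k l. (k,l)\<in>?C \<and> k\<noteq>a \<and> l\<noteq>b \<and> (x,y)\<noteq>(k,l) \<and> (x=k \<or> y=l)"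
  proof (cases "x = 1")
    case True
    have p: "pick b y \<in> {1..m}" "pick b y \<noteq> b" "pick b y \<noteq> y" using pick[of b y m] assms(1) by auto
    have "(1, pick b y) \<in> ?C" using p(1) by blast
    then show ?thesis using p a True by (intro exI[of _ 1] exI[of _ "pick b y"]) simp
  next
    case x1: False
    show ?thesis
    proof (cases "x = a")
      case True
      then have "y \<noteq> b" using xy by simp
      have "(1, y) \<in> ?C" using xy' by blast
      then show ?thesis using a \<open>y \<noteq> b\<close> x1 by (intro exI[of _ 1] exI[of _ y]) simp
    next
      case False
      show ?thesis
      proof (cases "y = 1")
        case True
        have "(1, 1) \<in> ?C" using xy' by simp
        then show ?thesis using a x1 True by (intro exI[of _ 1] exI[of _ 1]) simp
      next
        case y1: False
        have "(x, 1) \<in> ?C" using xy' by simp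
        then show ?thesis using a y1 False by (intro exI[of _ x] exI[of _ 1]) simp
      qed
    qed
  qed
qed

theorem theorem19:
  fixes m n :: nat
  assumes "2 \<le> n" and "n \<le> m"
  shows "gamma_SLD (complete_verts n \<times> complete_verts m) (dprod_adj complete_adj complete_adj)
    = (if n > 2 then m + n - 1 else if m > 2 then m else 4)"
proof -
  let ?T = "(if n > 2 then m + n - 1 else if m > 2 then m else 4)"
  let ?S = "{C. is_SLD (VV n m) EE C}"
  have finV: "finite (VV n m)" by (simp add: complete_verts_def)
  have fin: "finite (card ` ?S)"
  proof (rule finite_subset)
    show "card ` ?S \<subseteq> {..card (VV n m)}"
      using finV by (auto simp: is_SLD_def intro: card_mono)
  qed simp
  have mem: "?T \<in> card ` ?S"
  proof (cases "n > 2")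
    case True
    have m3: "3 \<le> m" using True assms by simp
    let ?C = "{1} \<times> {1..m} \<union> {1..n} \<times> {1::nat}"
    have "card ?C = m + n - 1"
    proof -
      have "?C = {1} \<times> {1..m} \<union> ({2..n} \<times> {1})" using assms by auto
      moreover have "card ({1::nat} \<times> {1..m}) = m" by (simp add: card_cartesian_product)
      moreover have "card ({2..n} \<times> {1::nat}) = n - 1" by (simp add: card_cartesian_product)
      moreover have "{1::nat} \<times> {1..m} \<inter> ({2..n} \<times> {1}) = {}" by auto
      ultimately show ?thesis using assms by (simp add: card_Un_disjoint)
    qed
    then show ?thesis using constr1[OF m3 assms(1)] True by force
  next
    case n2: False
    then have n: "n = 2" using assms by simp
    show ?thesis
    proof (cases "m > 2")
      case True
      have "card ({1::nat} \<times> {1..m}) = m" by (simp add: card_cartesian_product)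
      then show ?thesis using constr2[of m] True n by force
    next
      case False
      then have m: "m = 2" using assms n by simp
      have "is_SLD (VV 2 2) EE (VV 2 2)" unfolding is_SLD_def by (auto simp: complete_verts_def)
      moreover have "card (VV 2 2) = 4" by (simp add: complete_verts_def card_cartesian_product)
      ultimately show ?thesis using n m by force
    qed
  qed
  have lb: "\<forall>c\<in>card ` ?S. ?T \<le> c"
  proof
    fix c assume "c \<in> card ` ?S"
    then obtain C where C: "is_SLD (VV n m) EE C" "c = card C" by blast
    show "?T \<le> c"
    proof (cases "n = 2 \<and> m = 2")
      case True
      then have "C = VV 2 2" using two22 C(1) by simp
      then show ?thesis using True C by (simp add: complete_verts_def card_cartesian_product)
    next
      case False
      then have m3: "3 \<le> m" using assms by auto
      have b1: "?T \<le> (n-1)*m"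
      proof (cases "n > 2")
        case True
        then have "2*m \<le> (n-1)*m" by (intro mult_le_mono1) simp
        moreover have "?T = m+n-1" using True by simp
        ultimately show ?thesis using assms by linarith
      next
        case False
        then show ?thesis using assms m3 by simp
      qed
      have b2: "?T \<le> n*(m-1)"
      proof -
        have "2*(m-2) \<le> n*(m-2)" using assms by (intro mult_le_mono1) simp
        moreover have "n*(m-1) = n*(m-2) + n"
        proof -
          obtain k where "m = k + 2" using m3 le_Suc_ex[of 2 m] by (auto simp: add.commute)
          then show ?thesis by (simp add: algebra_simps)
        qed
        moreover have "?T \<le> m+n-1" using m3 assms by auto
        ultimately show ?thesis using m3 by linarith
      qed
      have b3: "?T \<le> m+n-1" using m3 assms by auto
      have b4: "?T \<le> 2*m" using b3 assms by linarith
      show ?thesis using lower[OF C(1)] b1 b2 b3 b4 C(2) by linarith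
    qed
  qed
  show ?thesis unfolding gamma_SLD_def
  proof (rule Min_eqI[OF fin])
    fix y assume "y \<in> card ` ?S"
    then show "?T \<le> y" using lb by blast
  next
    show "?T \<in> card ` ?S" by (rule mem)
  qed
qed

end
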